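(* Let $q \ge 2$, $n$ and $t$ be positive integers with $t \le 10\sqrt{n}$. For every integer $k\ge 0$ with $2k+2\le n$, \[ W_q(n,t, 2k+2) \leq W_q(n,t, 2k+1) \le 2\left(\frac{q^2t}{(q-1)n}\right)^{k} W_q(n,t,1) \le 2\left(\frac{q^2t}{(q-1)n}\right)^{k+1}V_q(n,t). \]
   Context: $V_q(m,r) = \sum_{j=0}^{r}\binom{m}{j}(q-1)^j$ (with $V_q(m,r)=0$ for $r<0$). For $x\in[q]^n$, $B_q(x,r)=\{y\in[q]^n : d(x,y)\le r\}$, where $d$ is the Hamming distance. For $0\le k\le n$, $W_q(n,t,k)$ denotes $|B_q(x,t)\cap B_q(y,t)|$ for any $x,y\in[q]^n$ with $d(x,y)=k$ (this does not depend on the choice of $x,y$). *)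

theory Defs
  imports Complex_Main "HOL-Library.FuncSet"
begin

definition hamming_space :: "nat \<Rightarrow> nat \<Rightarrow> (nat \<Rightarrow> nat) set" where
  "hamming_space q n = PiE {0..<n} (\<lambda>_. {0..<q})"

definition hdist :: "nat \<Rightarrow> (nat \<Rightarrow> nat) \<Rightarrow> (nat \<Rightarrow> nat) \<Rightarrow> nat" where
  "hdist n x y = card {i \<in> {0..<n}. x i \<noteq> y i}"

definition hball :: "nat \<Rightarrow> nat \<Rightarrow> (nat \<Rightarrow> nat) \<Rightarrow> nat \<Rightarrow> (nat \<Rightarrow> nat) set" where
  "hball q n x r = {y \<in> hamming_space q n. hdist n x y \<le> r}"

definition Vq :: "nat \<Rightarrow> nat \<Rightarrow> int \<Rightarrow> nat" where
  "Vq q m r = (if r < 0 then 0 else (\<Sum>j\<le>nat r. (m choose j) * (q - 1) ^ j))"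

text \<open>W_q(n,t,k) = |B(x,t) \<inter> B(y,t)| for d(x,y)=k; by symmetry we take the canonical
  pair x = 0...0 and y = 1^k 0^(n-k).\<close>
definition Wq :: "nat \<Rightarrow> nat \<Rightarrow> nat \<Rightarrow> nat \<Rightarrow> nat" where
  "Wq q n t k = card (hball q n (\<lambda>i. if i < n then 0 else undefined) t
                      \<inter> hball q n (\<lambda>i. if i < k then 1 else if i < n then 0 else undefined) t)"

end

theory Submission
  imports Defs
begin

definition L :: "nat \<Rightarrow> nat \<Rightarrow> nat list set" where
  "L q m = {xs. length xs = m \<and> set xs \<subseteq> {0..<q}}"

fun dl :: "nat list \<Rightarrow> nat list \<Rightarrow> nat" where
  "dl (a#xs) (b#ys) = (if a = b then 0 else 1) + dl xs ys"
| "dl _ _ = 0"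

lemma finite_L: "finite (L q m)"
proof -
  have "L q m = {xs. set xs \<subseteq> {0..<q} \<and> length xs = m}" unfolding L_def by auto
  thus ?thesis using finite_lists_length_eq[of "{0..<q}" m] by simp
qed

lemma card_L: "card (L q m) = q ^ m"
proof -
  have "L q m = {xs. set xs \<subseteq> {0..<q} \<and> length xs = m}" unfolding L_def by auto
  thus ?thesis using card_lists_length_eq[of "{0..<q}" m] by simp
qed

lemma L_Suc: "L q (Suc m) = (\<lambda>(a,xs). a#xs) ` ({0..<q} \<times> L q m)"
  unfolding L_def by (auto simp: image_iff length_Suc_conv)

lemma dl_sym: "dl xs ys = dl ys xs"
  by (induction xs ys rule: dl.induct) auto

lemma dl_append: "length xs = length us \<Longrightarrow> dl (xs@ys) (us@vs) = dl xs us + dl ys vs"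
  by (induction xs us rule: dl.induct) auto

lemma dl_update: "i < length xs \<Longrightarrow> length xs = length ys \<Longrightarrow>
  dl (xs[i:=a]) ys + (if xs!i = ys!i then 0 else 1) = dl xs ys + (if a = ys!i then 0 else 1)"
proof (induction xs arbitrary: i ys)
  case Nil then show ?case by simp
next
  case (Cons x xs)
  then obtain y ys' where ys: "ys = y # ys'" by (cases ys) auto
  show ?case
  proof (cases i)
    case 0 then show ?thesis using ys by simp
  next
    case (Suc j) then show ?thesis using ys Cons.IH[of j ys'] Cons.prems by simp
  qed
qed

lemma dl_update2: "i < length xs \<Longrightarrow> length xs = length ys \<Longrightarrow>
  dl ys (xs[i:=a]) + (if xs!i = ys!i then 0 else 1) = dl ys xs + (if a = ys!i then 0 else 1)"
  using dl_update[of i xs ys a] by (simp add: dl_sym)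

lemma dl_card: "length xs = length ys \<Longrightarrow> dl xs ys = card {i. i < length xs \<and> xs!i \<noteq> ys!i}"
proof (induction xs arbitrary: ys)
  case Nil then show ?case by simp
next
  case (Cons x xs)
  then obtain y ys' where ys: "ys = y # ys'" and len: "length xs = length ys'" by (cases ys) auto
  have eq: "{i. i < length (x#xs) \<and> (x#xs)!i \<noteq> ys!i} =
     (if x = y then {} else {0}) \<union> Suc ` {i. i < length xs \<and> xs!i \<noteq> ys'!i}"
  proof (intro set_eqI iffI)
    fix i assume "i \<in> {i. i < length (x#xs) \<and> (x#xs)!i \<noteq> ys!i}"
    then show "i \<in> (if x = y then {} else {0}) \<union> Suc ` {i. i < length xs \<and> xs!i \<noteq> ys'!i}"
      using ys by (cases i) auto
  next
    fix i assume "i \<in> (if x = y then {} else {0}) \<union> Suc ` {i. i < length xs \<and> xs!i \<noteq> ys'!i}"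
    then show "i \<in> {i. i < length (x#xs) \<and> (x#xs)!i \<noteq> ys!i}"
      using ys by (auto split: if_splits)
  qed
  have fin: "finite (Suc ` {i. i < length xs \<and> xs!i \<noteq> ys'!i})" by simp
  have "card (Suc ` {i. i < length xs \<and> xs!i \<noteq> ys'!i}) = card {i. i < length xs \<and> xs!i \<noteq> ys'!i}"
    by (simp add: card_image)
  then show ?case using eq Cons.IH[OF len] ys fin by (auto simp: card_insert_if)
qed

lemma dl_rep0_Cons: "dl (replicate (Suc m) 0) (a#xs) = (if a = 0 then 0 else 1) + dl (replicate m 0) xs"
  by simp

lemma count_eq:
  assumes "q \<ge> 1"
  shows "card {xs \<in> L q m. dl (replicate m 0) xs = j} = (m choose j) * (q-1)^j"
proof (induction m arbitrary: j)
  case 0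
  have "{xs \<in> L q 0. dl (replicate 0 0) xs = j} = (if j = 0 then {[]} else {})"
    by (auto simp: L_def)
  then show ?case by simp
next
  case (Suc m)
  let ?A = "\<lambda>j. {xs \<in> L q m. dl (replicate m 0) xs = j}"
  show ?case
  proof (cases j)
    case 0
    have "{xs \<in> L q (Suc m). dl (replicate (Suc m) 0) xs = j} = (\<lambda>xs. 0#xs) ` ?A 0"
      using 0 assms by (auto simp: L_Suc image_iff split: if_splits)
    moreover have "card ((\<lambda>xs. 0#xs) ` ?A 0) = card (?A 0)" by (simp add: card_image)
    ultimately show ?thesis using Suc.IH[of 0] 0 by simp
  next
    case (Suc j')
    have e: "{xs \<in> L q (Suc m). dl (replicate (Suc m) 0) xs = j} =
       (\<lambda>xs. 0#xs) ` ?A j \<union> (\<lambda>(a,xs). a#xs) ` ({1..<q} \<times> ?A j')"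
      using Suc assms by (auto simp: L_Suc image_iff split: if_splits)
    have d: "(\<lambda>xs. 0#xs) ` ?A j \<inter> (\<lambda>(a,xs). a#xs) ` ({1..<q} \<times> ?A j') = {}" by auto
    have c1: "card ((\<lambda>xs. 0#xs) ` ?A j) = card (?A j)" by (simp add: card_image)
    have "inj_on (\<lambda>(a,xs). a#xs) ({1..<q} \<times> ?A j')" by (auto simp: inj_on_def)
    hence c2: "card ((\<lambda>(a,xs). a#xs) ` ({1..<q} \<times> ?A j')) = (q-1) * card (?A j')"
      by (simp add: card_image card_cartesian_product)
    have fA: "finite (?A i)" for i using finite_L by simp
    have "card {xs \<in> L q (Suc m). dl (replicate (Suc m) 0) xs = j}
        = card (?A j) + (q-1) * card (?A j')"
      unfolding e using d fA c1 c2 by (simp add: card_Un_disjoint)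
    also have "\<dots> = (m choose j) * (q-1)^j + (q-1) * ((m choose j') * (q-1)^j')"
      using Suc.IH by simp
    also have "\<dots> = (Suc m choose j) * (q-1)^j"
    proof -
      have "\<And>p::nat. (m choose Suc j') * p^Suc j' + p * ((m choose j') * p^j') = (Suc m choose Suc j') * p^Suc j'"
        by (simp add: algebra_simps)
      then show ?thesis using Suc by simp
    qed
    finally show ?thesis .
  qed
qed

lemma count_le:
  assumes "q \<ge> 1"
  shows "card {xs \<in> L q m. dl (replicate m 0) xs \<le> s} = (\<Sum>j\<le>s. (m choose j) * (q-1)^j)"
proof -
  have e: "{xs \<in> L q m. dl (replicate m 0) xs \<le> s} = (\<Union>j\<in>{..s}. {xs \<in> L q m. dl (replicate m 0) xs = j})"
    by auto
  show ?thesis unfolding e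
    by (subst card_UN_disjoint) (auto simp: finite_L count_eq[OF assms])
qed

lemma Vq_eq: "Vq q m (int s) = (\<Sum>j\<le>s. (m choose j) * (q-1)^j)"
  unfolding Vq_def by simp

definition toF :: "nat \<Rightarrow> nat list \<Rightarrow> (nat \<Rightarrow> nat)" where
  "toF n xs = (\<lambda>i. if i < n then xs ! i else undefined)"

definition Y :: "nat \<Rightarrow> nat \<Rightarrow> nat list" where
  "Y n d = replicate d 1 @ replicate (n - d) 0"

definition WS :: "nat \<Rightarrow> nat \<Rightarrow> nat \<Rightarrow> nat \<Rightarrow> nat list set" where
  "WS q n t d = {zs \<in> L q n. dl (replicate n 0) zs \<le> t \<and> dl (Y n d) zs \<le> t}"

lemma length_Y[simp]: "d \<le> n \<Longrightarrow> length (Y n d) = n" by (simp add: Y_def)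

lemma hs_eq: "hamming_space q n = toF n ` L q n"
proof (intro set_eqI iffI)
  fix f assume f: "f \<in> hamming_space q n"
  hence fP: "f \<in> PiE {0..<n} (\<lambda>_. {0..<q})" by (simp add: hamming_space_def)
  have "toF n (map f [0..<n]) = f"
  proof
    fix i show "toF n (map f [0..<n]) i = f i"
    proof (cases "i < n")
      case True then show ?thesis by (simp add: toF_def)
    next
      case False
      then have "f i = undefined" using PiE_arb[OF fP] by simp
      then show ?thesis using False by (simp add: toF_def)
    qed
  qed
  moreover have "map f [0..<n] \<in> L q n"
  proof -
    have "\<And>i. i < n \<Longrightarrow> f i \<in> {0..<q}" using PiE_mem[OF fP] by simp
    then show ?thesis unfolding L_def by auto
  qed
  ultimately show "f \<in> toF n ` L q n" by (metis image_eqI)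
next
  fix f assume "f \<in> toF n ` L q n"
  then obtain xs where xs: "xs \<in> L q n" "f = toF n xs" by auto
  have "toF n xs \<in> PiE {0..<n} (\<lambda>_. {0..<q})"
  proof (rule PiE_I)
    fix i assume "i \<in> {0..<n}"
    then show "toF n xs i \<in> {0..<q}" using xs(1) nth_mem[of i xs] unfolding L_def toF_def by force
  next
    fix i assume "i \<notin> {0..<n}"
    then show "toF n xs i = undefined" unfolding toF_def by simp
  qed
  then show "f \<in> hamming_space q n" using xs(2) by (simp add: hamming_space_def)
qed

lemma inj_toF: "inj_on (toF n) (L q n)"
proof
  fix xs ys assume a: "xs \<in> L q n" "ys \<in> L q n" "toF n xs = toF n ys"
  show "xs = ys"
  proof (rule nth_equalityI)
    show "length xs = length ys" using a by (simp add: L_def)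
    fix i assume "i < length xs"
    moreover have "toF n xs i = toF n ys i" by (simp only: a(3))
    ultimately show "xs ! i = ys ! i" using a by (simp add: L_def toF_def)
  qed
qed

lemma hdist_toF: "length xs = n \<Longrightarrow> length ys = n \<Longrightarrow> hdist n (toF n xs) (toF n ys) = dl xs ys"
proof -
  assume l: "length xs = n" "length ys = n"
  have "{i \<in> {0..<n}. toF n xs i \<noteq> toF n ys i} = {i. i < length xs \<and> xs!i \<noteq> ys!i}"
    using l by (auto simp: toF_def)
  then show ?thesis using l by (simp add: hdist_def dl_card)
qed

lemma Wq_eq: assumes "d \<le> n" shows "Wq q n t d = card (WS q n t d)"
proof -
  have x0: "(\<lambda>i. if i < n then 0 else undefined) = toF n (replicate n 0)"
    by (auto simp: toF_def)
  have y0: "(\<lambda>i. if i < d then 1 else if i < n then 0 else undefined) = toF n (Y n d)"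
    using assms by (auto simp: toF_def Y_def nth_append)
  have h: "hball q n (toF n (replicate n 0)) t \<inter> hball q n (toF n (Y n d)) t = toF n ` WS q n t d"
    using assms by (auto simp: hball_def hs_eq WS_def hdist_toF L_def)
  have i: "inj_on (toF n) (WS q n t d)"
  proof (rule inj_on_subset[OF inj_toF])
    show "WS q n t d \<subseteq> L q n" unfolding WS_def by blast
  qed
  have c: "card (toF n ` WS q n t d) = card (WS q n t d)" by (rule card_image[OF i])
  have w: "Wq q n t d = card (hball q n (toF n (replicate n 0)) t \<inter> hball q n (toF n (Y n d)) t)"
    unfolding Wq_def x0 y0 by (rule refl)
  show ?thesis using w h c by simp
qed

lemma Y_Suc: "d < n \<Longrightarrow> Y n (Suc d) = (Y n d)[d := 1]"
proof -
  assume "d < n"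
  then obtain m where m: "n - d = Suc m" by (metis Suc_diff_Suc)
  then have "n - Suc d = m" by simp
  moreover have "replicate (Suc d) (1::nat) = replicate d 1 @ [1]" by (simp add: replicate_append_same)
  ultimately show ?thesis using m by (simp add: Y_def list_update_append)
qed

lemma Y_nth: "d < n \<Longrightarrow> Y n d ! d = 0"
  by (simp add: Y_def nth_append)

lemma WS_mono: assumes "d < n" "q \<ge> 1" shows "card (WS q n t (Suc d)) \<le> card (WS q n t d)"
proof -
  let ?o = "replicate n 0" and ?y = "Y n d" and ?y' = "Y n (Suc d)"
  define f where "f zs = (if zs \<in> WS q n t d then zs else zs[d := 0])" for zs
  have ly: "length ?y = n" "length ?y' = n" "length ?o = n" using assms(1) by auto
  have yd: "?y ! d = 0" using Y_nth[OF assms(1)] .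
  have y'd: "?y' ! d = 1" using assms by (simp add: Y_Suc)
  have od: "?o ! d = 0" using assms by simp
  have key: "zs ! d = 1 \<and> dl ?y zs = dl ?y' zs + 1"
    if z: "zs \<in> WS q n t (Suc d)" "zs \<notin> WS q n t d" for zs
  proof -
    have lz: "length zs = n" using z by (simp add: WS_def L_def)
    have u: "dl ?y' zs + (if ?y!d = zs!d then 0 else 1) = dl ?y zs + (if 1 = zs!d then 0 else 1)"
      using dl_update[of d ?y zs 1] assms ly lz by (simp add: Y_Suc)
    have "dl ?y zs > t" "dl ?y' zs \<le> t" "dl ?o zs \<le> t" using z by (auto simp: WS_def)
    then show ?thesis using u yd by (auto split: if_splits)
  qed
  have fin: "f zs \<in> WS q n t d" if z: "zs \<in> WS q n t (Suc d)" for zs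
  proof (cases "zs \<in> WS q n t d")
    case True then show ?thesis by (simp add: f_def)
  next
    case False
    have lz: "length zs = n" using z by (simp add: WS_def L_def)
    have k: "zs ! d = 1" "dl ?y zs = dl ?y' zs + 1" using key[OF z False] by auto
    have u1: "dl ?o (zs[d:=0]) + (if zs!d = ?o!d then 0 else 1) = dl ?o zs + (if 0 = ?o!d then 0 else 1)"
      using dl_update2[of d zs ?o 0] assms ly lz by simp
    have u2: "dl ?y (zs[d:=0]) + (if zs!d = ?y!d then 0 else 1) = dl ?y zs + (if 0 = ?y!d then 0 else 1)"
      using dl_update2[of d zs ?y 0] assms ly lz by simp
    have "dl ?o zs \<le> t" "dl ?y' zs \<le> t" "zs \<in> L q n" using z by (auto simp: WS_def)
    moreover have "zs[d:=0] \<in> L q n" using \<open>zs \<in> L q n\<close> assms set_update_subset_insert[of zs d 0]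
      by (auto simp: L_def)
    ultimately have "zs[d:=0] \<in> WS q n t d" using u1 u2 k od yd assms(1) by (simp add: WS_def)
    then show ?thesis using False by (simp add: f_def)
  qed
  have inj: "inj_on f (WS q n t (Suc d))"
  proof
    fix zs ws assume z: "zs \<in> WS q n t (Suc d)" and w: "ws \<in> WS q n t (Suc d)" and e: "f zs = f ws"
    have lz: "length zs = n" using z by (simp add: WS_def L_def)
    have lw: "length ws = n" using w by (simp add: WS_def L_def)
    have bad: False if z: "zs \<in> WS q n t (Suc d)" "zs \<notin> WS q n t d"
        and w: "ws \<in> WS q n t (Suc d)" "ws = zs[d:=0]" for zs ws
    proof -
      have lz: "length zs = n" using z by (simp add: WS_def L_def)
      have k: "zs ! d = 1" "dl ?y zs = dl ?y' zs + 1" using key[OF z] by auto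
      have u: "dl ?y' (zs[d:=0]) + (if zs!d = ?y'!d then 0 else 1) = dl ?y' zs + (if 0 = ?y'!d then 0 else 1)"
        using dl_update2[of d zs ?y' 0] assms ly lz by simp
      have "dl ?y' ws \<le> t" "dl ?y zs > t" using w z by (auto simp: WS_def)
      then show False using u k y'd w by simp
    qed
    show "zs = ws"
    proof (cases "zs \<in> WS q n t d"; cases "ws \<in> WS q n t d")
      assume "zs \<in> WS q n t d" "ws \<in> WS q n t d" then show ?thesis using e by (simp add: f_def)
    next
      assume a: "zs \<in> WS q n t d" "ws \<notin> WS q n t d"
      then have "zs = ws[d:=0]" using e by (simp add: f_def)
      then show ?thesis using bad[OF w a(2) z] by simp
    next
      assume a: "zs \<notin> WS q n t d" "ws \<in> WS q n t d"
      then have "ws = zs[d:=0]" using e by (simp add: f_def)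
      then show ?thesis using bad[OF z a(1) w] by simp
    next
      assume a: "zs \<notin> WS q n t d" "ws \<notin> WS q n t d"
      then have "zs[d:=0] = ws[d:=0]" using e by (simp add: f_def)
      then have "(zs[d:=0])[d:=1] = (ws[d:=0])[d:=1]" by simp
      then show ?thesis using key[OF z a(1)] key[OF w a(2)] list_update_id[of zs d] list_update_id[of ws d] by simp
    qed
  qed
  have "finite (WS q n t d)" using finite_L by (simp add: WS_def)
  then show ?thesis using card_inj_on_le[OF inj] fin by blast
qed

lemma WS_one: assumes "n \<ge> 1" "t \<ge> 1"
  shows "card (WS q n t 1) = q * card {xs \<in> L q (n-1). dl (replicate (n-1) 0) xs \<le> t-1}"
proof -
  obtain m where n: "n = Suc m" using assms by (cases n) auto
  let ?B = "{xs \<in> L q m. dl (replicate m 0) xs \<le> t-1}"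
  have Y1: "Y (Suc m) 1 = 1 # replicate m 0" by (simp add: Y_def)
  have mem: "(a#xs \<in> WS q n t 1) = ((a,xs) \<in> {0..<q} \<times> ?B)" for a xs
    unfolding WS_def L_def n using assms(2) by (cases "a = 0"; cases "a = 1") (auto simp: Y_def)
  have "WS q n t 1 = (\<lambda>(a,xs). a#xs) ` ({0..<q} \<times> ?B)"
  proof (intro set_eqI iffI)
    fix zs assume z: "zs \<in> WS q n t 1"
    then have "length zs = Suc m" by (simp add: WS_def L_def n)
    then obtain a xs where zs: "zs = a#xs" by (cases zs) auto
    then show "zs \<in> (\<lambda>(a,xs). a#xs) ` ({0..<q} \<times> ?B)" using z mem[of a xs] by force
  next
    fix zs assume "zs \<in> (\<lambda>(a,xs). a#xs) ` ({0..<q} \<times> ?B)"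
    then obtain a xs where "zs = a#xs" "(a,xs) \<in> {0..<q} \<times> ?B" by auto
    then show "zs \<in> WS q n t 1" using mem[of a xs] by simp
  qed
  moreover have "inj_on (\<lambda>(a,xs). a#xs) ({0..<q} \<times> ?B)" by (auto simp: inj_on_def)
  ultimately show ?thesis using n by (simp add: card_image card_cartesian_product)
qed

lemma dl01: "length us = d \<Longrightarrow> dl (replicate d 0) us + dl (replicate d 1) us \<ge> d"
  by (induction us arbitrary: d) auto

lemma WS_odd: assumes "2*k+1 \<le> n"
  shows "card (WS q n t (2*k+1)) \<le> q^(2*k+1) * card {vs \<in> L q (n-(2*k+1)). 2 * dl (replicate (n-(2*k+1)) 0) vs + (2*k+1) \<le> 2*t}"
proof -
  let ?d = "2*k+1"
  let ?B = "{vs \<in> L q (n-?d). 2 * dl (replicate (n-?d) 0) vs + (2*k+1) \<le> 2*t}"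
  have sub: "WS q n t ?d \<subseteq> (\<lambda>(us,vs). us@vs) ` (L q ?d \<times> ?B)"
  proof
    fix zs assume z: "zs \<in> WS q n t ?d"
    let ?us = "take ?d zs" and ?vs = "drop ?d zs"
    have lz: "length zs = n" "set zs \<subseteq> {0..<q}" using z by (auto simp: WS_def L_def)
    have lu: "length ?us = ?d" "length ?vs = n - ?d" using lz assms by auto
    have zs: "zs = ?us @ ?vs" by simp
    have r0: "replicate n (0::nat) = replicate ?d 0 @ replicate (n - ?d) 0"
      using assms by (metis le_add_diff_inverse replicate_add)
    have e0: "dl (replicate n 0) zs = dl (replicate ?d 0 @ replicate (n-?d) 0) (?us @ ?vs)"
      by (simp only: r0 append_take_drop_id)
    also have "\<dots> = dl (replicate ?d 0) ?us + dl (replicate (n-?d) 0) ?vs"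
      by (rule dl_append) (use lz assms in simp)
    finally have a: "dl (replicate ?d 0) ?us + dl (replicate (n-?d) 0) ?vs \<le> t"
      using z by (simp add: WS_def)
    have e1: "dl (Y n ?d) zs = dl (replicate ?d 1 @ replicate (n-?d) 0) (?us @ ?vs)"
      by (simp only: Y_def append_take_drop_id)
    also have "\<dots> = dl (replicate ?d 1) ?us + dl (replicate (n-?d) 0) ?vs"
      by (rule dl_append) (use lz assms in simp)
    finally have b: "dl (replicate ?d 1) ?us + dl (replicate (n-?d) 0) ?vs \<le> t"
      using z by (simp add: WS_def)
    have c: "dl (replicate ?d 0) ?us + dl (replicate ?d 1) ?us \<ge> ?d" using dl01 lu(1) by blast
    have w: "2 * dl (replicate (n-?d) 0) ?vs + (2*k+1) \<le> 2*t" using a b c by linarith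
    have u: "?us \<in> L q ?d" using lu lz set_take_subset[of ?d zs] unfolding L_def by blast
    have v: "?vs \<in> L q (n-?d)" using lu lz set_drop_subset[of ?d zs] unfolding L_def by blast
    have "(?us,?vs) \<in> L q ?d \<times> ?B" using u v w by blast
    moreover have "zs = (\<lambda>(us,vs). us@vs) (?us,?vs)" by simp
    ultimately show "zs \<in> (\<lambda>(us,vs). us@vs) ` (L q ?d \<times> ?B)" by (rule rev_image_eqI)
  qed
  have fin: "finite (L q ?d \<times> ?B)" using finite_L by simp
  have "card (WS q n t ?d) \<le> card ((\<lambda>(us,vs). us@vs) ` (L q ?d \<times> ?B))"
    by (rule card_mono[OF finite_imageI[OF fin] sub])
  also have "\<dots> \<le> card (L q ?d \<times> ?B)" by (rule card_image_le[OF fin])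
  also have "\<dots> = q^?d * card ?B" by (simp add: card_cartesian_product card_L)
  finally show ?thesis .
qed

lemma binom_step: "Suc k * (x choose Suc k) = (x - k) * (x choose k)"
  using binomial_absorption[of k x] binomial_absorb_comp[of x k] by simp

lemma lemG: "A \<le> B \<Longrightarrow> (A choose k) * (B+1)^k \<le> (A+1)^k * (B choose k)"
proof (induction k)
  case 0 then show ?case by simp
next
  case (Suc k)
  have ineq: "(A - k) * (B+1) \<le> (A+1) * (B - k)"
  proof (cases "k \<le> A")
    case True
    then obtain a where a: "A = k + a" by (metis le_add_diff_inverse)
    obtain b where b: "B = A + b" using Suc.prems by (metis le_add_diff_inverse)
    show ?thesis unfolding a b by (simp add: algebra_simps)
  next
    case False then show ?thesis by simp
  qed
  have "Suc k * ((A choose Suc k) * (B+1)^Suc k) = (Suc k * (A choose Suc k)) * (B+1)^Suc k"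
    by (simp only: mult.assoc)
  also have "\<dots> = ((A - k) * (A choose k)) * (B+1)^Suc k" by (simp only: binom_step)
  also have "\<dots> = ((A - k) * (B+1)) * ((A choose k) * (B+1)^k)" by (simp only: power_Suc mult_ac)
  also have "\<dots> \<le> ((A+1) * (B - k)) * ((A+1)^k * (B choose k))"
    by (rule mult_le_mono[OF ineq Suc.IH[OF Suc.prems]])
  also have "\<dots> = (A+1)^Suc k * ((B - k) * (B choose k))" by (simp only: power_Suc mult_ac)
  also have "\<dots> = (A+1)^Suc k * (Suc k * (B choose Suc k))" by (simp only: binom_step)
  also have "\<dots> = Suc k * ((A+1)^Suc k * (B choose Suc k))" by (simp only: mult_ac)
  finally show ?case by (simp only: mult_le_cancel1)
qed

lemma lemH:
  fixes j k t n :: nat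
  assumes "j + k < t" "n \<ge> 1" "k \<le> n - 1"
  shows "((n-1-k) choose j) * n^k \<le> t^k * ((n-1) choose (j+k))"
proof (cases "j + k \<le> n - 1")
  case False
  then have "n - 1 - k < j" using assms(3) by linarith
  then show ?thesis by (simp add: binomial_eq_0)
next
  case True
  let ?N = "n - 1" and ?a = "min t n"
  have cm: "(?N choose (j+k)) * ((j+k) choose k) = (?N choose k) * ((?N - k) choose j)"
    using choose_mult[of k "j+k" ?N] True by simp
  have a1: "?a \<ge> 1" using assms by simp
  have "((j+k) choose k) \<le> ((?a - 1) choose k)"
    by (rule binomial_right_mono) (use assms True in linarith)
  hence "((j+k) choose k) * n^k \<le> ((?a - 1) choose k) * n^k" by simp
  also have "\<dots> \<le> ?a^k * (?N choose k)"
    using lemG[of "?a - 1" "n - 1" k] a1 assms by simp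
  also have "\<dots> \<le> t^k * (?N choose k)"
    by (intro mult_right_mono power_mono) auto
  finally have key: "((j+k) choose k) * n^k \<le> t^k * (?N choose k)" .
  have "((?N - k) choose j) * n^k * ((j+k) choose k) = ((?N - k) choose j) * (((j+k) choose k) * n^k)"
    by (simp add: algebra_simps)
  also have "\<dots> \<le> ((?N - k) choose j) * (t^k * (?N choose k))"
    using key by simp
  also have "\<dots> = t^k * (?N choose (j+k)) * ((j+k) choose k)" using cm by (simp add: algebra_simps)
  finally have "((?N - k) choose j) * n^k * ((j+k) choose k) \<le> t^k * (?N choose (j+k)) * ((j+k) choose k)" .
  moreover have "((j+k) choose k) > 0" by simp
  ultimately show ?thesis by simp
qed

definition Vs :: "nat \<Rightarrow> nat \<Rightarrow> nat \<Rightarrow> nat" where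
  "Vs q m s = (\<Sum>j\<le>s. (m choose j) * (q-1)^j)"

lemma B2:
  assumes "k + 1 \<le> t" "2*k+2 \<le> n"
  shows "Vs q (n-(2*k+1)) (t-k-1) * ((q-1)*n)^k \<le> t^k * Vs q (n-1) (t-1)"
proof -
  let ?f = "\<lambda>i. t^k * (((n-1) choose i) * (q-1)^i)"
  have "Vs q (n-(2*k+1)) (t-k-1) * ((q-1)*n)^k = (\<Sum>j\<le>t-k-1. ((n-(2*k+1)) choose j) * n^k * (q-1)^(j+k))"
    unfolding Vs_def sum_distrib_right by (intro sum.cong refl) (simp add: power_add power_mult_distrib mult_ac)
  also have "\<dots> \<le> (\<Sum>j\<le>t-k-1. ?f (j+k))"
  proof (rule sum_mono)
    fix j assume j: "j \<in> {..t-k-1}"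
    have "((n-(2*k+1)) choose j) \<le> ((n-1-k) choose j)" by (rule binomial_right_mono) simp
    hence "((n-(2*k+1)) choose j) * n^k \<le> ((n-1-k) choose j) * n^k" by simp
    also have "\<dots> \<le> t^k * ((n-1) choose (j+k))" by (rule lemH) (use j assms in auto)
    finally show "((n-(2*k+1)) choose j) * n^k * (q-1)^(j+k) \<le> ?f (j+k)"
      by (simp add: mult.assoc)
  qed
  also have "\<dots> = sum ?f ((\<lambda>j. j+k) ` {..t-k-1})"
    by (subst sum.reindex) (auto simp: inj_on_def)
  also have "\<dots> \<le> sum ?f {..t-1}"
    by (rule sum_mono2) (use assms in auto)
  also have "\<dots> = t^k * Vs q (n-1) (t-1)" unfolding Vs_def by (simp add: sum_distrib_left)
  finally show ?thesis .
qed

lemma B3: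
  assumes "t \<ge> 1" "n \<ge> 1"
  shows "(q-1) * n * Vs q (n-1) (t-1) \<le> t * Vs q n t"
proof -
  let ?g = "\<lambda>i. t * ((n choose i) * (q-1)^i)"
  have "(q-1) * n * Vs q (n-1) (t-1) = (\<Sum>j\<le>t-1. (n * ((n-1) choose j)) * (q-1)^Suc j)"
    unfolding Vs_def sum_distrib_left by (intro sum.cong) (auto simp: algebra_simps)
  also have "\<dots> = (\<Sum>j\<le>t-1. (Suc j * (n choose Suc j)) * (q-1)^Suc j)"
    by (intro sum.cong refl) (simp only: binomial_absorption)
  also have "\<dots> \<le> (\<Sum>j\<le>t-1. ?g (Suc j))"
  proof (rule sum_mono)
    fix j assume "j \<in> {..t-1}"
    then have "Suc j \<le> t" using assms by auto
    then have "Suc j * (n choose Suc j) \<le> t * (n choose Suc j)" by (rule mult_le_mono1)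
    then show "(Suc j * (n choose Suc j)) * (q-1)^Suc j \<le> ?g (Suc j)"
      by (metis mult_le_mono1 mult.assoc)
  qed
  also have "\<dots> \<le> ?g 0 + (\<Sum>j\<le>t-1. ?g (Suc j))" by simp
  also have "\<dots> = (\<Sum>i\<le>Suc (t-1). ?g i)" by (rule sum.atMost_Suc_shift[symmetric])
  also have "\<dots> = t * Vs q n t" using assms unfolding Vs_def by (simp add: sum_distrib_left)
  finally show ?thesis .
qed

theorem lemma3p4:
  fixes q n t k :: nat
  assumes "q \<ge> 2" and "n > 0" and "t > 0"
    and "real t \<le> 10 * sqrt (real n)"
    and "2 * k + 2 \<le> n"
  shows "Wq q n t (2*k+2) \<le> Wq q n t (2*k+1)
    \<and> real (Wq q n t (2*k+1)) \<le> 2 * (real (q^2) * real t / (real (q - 1) * real n)) ^ k * real (Wq q n t 1)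
    \<and> 2 * (real (q^2) * real t / (real (q - 1) * real n)) ^ k * real (Wq q n t 1)
        \<le> 2 * (real (q^2) * real t / (real (q - 1) * real n)) ^ (k+1) * real (Vq q n (int t))"
proof -
  define R where "R = real (q^2) * real t / (real (q - 1) * real n)"
  have q1: "q \<ge> 1" using assms by simp
  have qm: "real (q - 1) > 0" using assms by simp
  have np: "real n > 0" using assms by simp
  have Rpos: "R \<ge> 0" unfolding R_def using qm np by simp
  have I1: "Wq q n t (2*k+2) \<le> Wq q n t (2*k+1)"
  proof -
    have "card (WS q n t (Suc (2*k+1))) \<le> card (WS q n t (2*k+1))"
      by (rule WS_mono) (use assms q1 in auto)
    moreover have "Suc (2*k+1) = 2*k+2" by simp
    ultimately show ?thesis using assms by (simp add: Wq_eq)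
  qed
  have W1: "Wq q n t 1 = q * Vs q (n-1) (t-1)"
  proof -
    have "Wq q n t 1 = card (WS q n t 1)" by (rule Wq_eq) (use assms in simp)
    also have "\<dots> = q * card {xs \<in> L q (n-1). dl (replicate (n-1) 0) xs \<le> t-1}"
      by (rule WS_one) (use assms in auto)
    also have "\<dots> = q * Vs q (n-1) (t-1)" by (simp add: count_le[OF q1] Vs_def)
    finally show ?thesis .
  qed
  have V: "Vq q n (int t) = Vs q n t" by (simp add: Vq_eq Vs_def)
  have I3: "real (Wq q n t 1) \<le> R * real (Vq q n (int t))"
  proof -
    have b3: "(q-1) * n * Vs q (n-1) (t-1) \<le> t * Vs q n t" by (rule B3) (use assms in auto)
    have "q * ((q-1) * n * Vs q (n-1) (t-1)) \<le> q * (t * Vs q n t)" using b3 by simp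
    also have "\<dots> \<le> q^2 * (t * Vs q n t)" by (simp add: power2_eq_square)
    finally have "q * ((q-1) * n * Vs q (n-1) (t-1)) \<le> q^2 * (t * Vs q n t)" .
    hence "real (q * ((q-1) * n * Vs q (n-1) (t-1))) \<le> real (q^2 * (t * Vs q n t))"
      by (simp only: of_nat_le_iff)
    hence "real (q * Vs q (n-1) (t-1)) * (real (q-1) * real n) \<le> real (q^2) * real t * real (Vs q n t)"
      by (simp only: of_nat_mult mult_ac)
    hence "real (q * Vs q (n-1) (t-1)) \<le> real (q^2) * real t * real (Vs q n t) / (real (q-1) * real n)"
      using qm np by (simp add: pos_le_divide_eq)
    also have "\<dots> = R * real (Vs q n t)" unfolding R_def by simp
    finally show ?thesis using W1 V by simp
  qed
  have I2: "real (Wq q n t (2*k+1)) \<le> R^k * real (Wq q n t 1)"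
  proof -
    have Wo: "Wq q n t (2*k+1) \<le> q^(2*k+1) * card {vs \<in> L q (n-(2*k+1)). 2 * dl (replicate (n-(2*k+1)) 0) vs + (2*k+1) \<le> 2*t}"
      using WS_odd[of k n q t] assms by (simp add: Wq_eq)
    show ?thesis
    proof (cases "t \<le> k")
      case True
      then have E: "{vs \<in> L q (n-(2*k+1)). 2 * dl (replicate (n-(2*k+1)) 0) vs + (2*k+1) \<le> 2*t} = {}" by auto
      have "Wq q n t (2*k+1) = 0" using Wo unfolding E by simp
      then show ?thesis using Rpos by simp
    next
      case False
      have "{vs \<in> L q (n-(2*k+1)). 2 * dl (replicate (n-(2*k+1)) 0) vs + (2*k+1) \<le> 2*t}
          = {vs \<in> L q (n-(2*k+1)). dl (replicate (n-(2*k+1)) 0) vs \<le> t-k-1}"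
        using False by auto
      then have Wo2: "Wq q n t (2*k+1) \<le> q^(2*k+1) * Vs q (n-(2*k+1)) (t-k-1)"
        using Wo by (simp add: count_le[OF q1] Vs_def)
      have b2: "Vs q (n-(2*k+1)) (t-k-1) * ((q-1)*n)^k \<le> t^k * Vs q (n-1) (t-1)"
        by (rule B2) (use False assms in auto)
      define D where "D = (real (q-1) * real n)^k"
      have Dp: "D > 0" unfolding D_def using qm np by simp
      have "real (Vs q (n-(2*k+1)) (t-k-1)) * D \<le> real t^k * real (Vs q (n-1) (t-1))"
        using b2 unfolding D_def by (metis of_nat_le_iff of_nat_mult of_nat_power)
      hence v: "real (Vs q (n-(2*k+1)) (t-k-1)) \<le> real t^k * real (Vs q (n-1) (t-1)) / D"
        using Dp by (simp add: pos_le_divide_eq)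
      have Rk: "R^k = real q^(2*k) * real t^k / D"
        unfolding R_def D_def by (simp add: power_divide power_mult_distrib power_mult)
      have "real (Wq q n t (2*k+1)) \<le> real q^(2*k+1) * real (Vs q (n-(2*k+1)) (t-k-1))"
        using Wo2 by (metis of_nat_le_iff of_nat_mult of_nat_power)
      also have "\<dots> \<le> real q^(2*k+1) * (real t^k * real (Vs q (n-1) (t-1)) / D)"
        by (rule mult_left_mono[OF v]) simp
      also have "\<dots> = R^k * real (Wq q n t 1)"
        unfolding Rk W1 of_nat_mult power_add by (simp add: mult_ac)
      finally show ?thesis .
    qed
  qed
  have I2': "real (Wq q n t (2*k+1)) \<le> 2 * R^k * real (Wq q n t 1)"
    using I2 mult_nonneg_nonneg[OF zero_le_power[OF Rpos, of k] of_nat_0_le_iff[of "Wq q n t 1"]] by linarith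
  have I3': "2 * R^k * real (Wq q n t 1) \<le> 2 * R^(k+1) * real (Vq q n (int t))"
  proof -
    have "2 * R^k * real (Wq q n t 1) \<le> 2 * R^k * (R * real (Vq q n (int t)))"
      by (rule mult_left_mono[OF I3]) (use Rpos in simp)
    also have "\<dots> = 2 * R^(k+1) * real (Vq q n (int t))" by (simp add: algebra_simps)
    finally show ?thesis .
  qed
  show ?thesis unfolding R_def[symmetric] using I1 I2' I3' by blast
qed

end
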